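(* For a quantum sequence ensemble $\mathcal{E}=\bigotimes_{l=1}^{L}\mathcal{E}^{l}$ and $\vec{x}=(x_{1},\ldots,x_{L})$ with $x_l\in\{1,\ldots,n_l\}$, we have \[ \mathcal{C}_{\vec{x}}(\mathcal{E})=\prod_{l=1}^{L}\mathcal{C}_{x_{l}}(\mathcal{E}^{l}). \]
   Context: Let $\mathcal{E}^{l}=\{\eta_{i}^{l},\rho_{i}^{l}\}_{i\in\{1,\ldots,n_{l}\}}$, $l=1,\ldots,L$, be quantum state ensembles (density operators $\rho_i^l$ on finite-dimensional Hilbert spaces, prepared with nonzero probabilities $\eta_i^l$), with average states $\rho_0^l=\sum_i\eta_i^l\rho_i^l$. The quantum sequence ensemble is $\mathcal{E}=\bigotimes_{l=1}^{L}\mathcal{E}^{l}=\{\eta_{\vec{c}},\rho_{\vec{c}}\}_{\vec{c}}$ with $\eta_{\vec{c}}=\prod_l\eta_{c_l}^l$, $\rho_{\vec{c}}=\bigotimes_l\rho_{c_l}^l$, and average state $\rho_0=\bigotimes_l\rho_0^l$. For any ensemble $\{\eta_i,\rho_i\}_i$ with average state $\rho_0$, and measurements (POVMs) $\{M_?\}\cup\{M_i\}_i$ where outcome $M_i$ means guessing $\rho_i$ and $M_?$ is inconclusive, the maximum confidence to identify $\rho_x$ is $\mathcal{C}_x=\max \eta_x\mathrm{Tr}(\rho_xM_x)/\mathrm{Tr}(\rho_0M_x)$ over all measurements with $\mathrm{Tr}(\rho_0M_x)>0$, i.e. the maximal conditional probability that $\rho_x$ was prepared given outcome $M_x$. $\mathcal{C}_{x_l}(\mathcal{E}^l)$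 is this quantity for ensemble $\mathcal{E}^l$, and $\mathcal{C}_{\vec{x}}(\mathcal{E})$ for the sequence ensemble. *)

theory Defs
  imports "HOL-Analysis.Analysis"
begin

text \<open>Linear operators on a finite-dimensional Hilbert space are represented as
  complex matrices indexed by a finite index set I (an orthonormal basis).\<close>

type_synonym 'a op = "'a \<Rightarrow> 'a \<Rightarrow> complex"

definition tr :: "'a set \<Rightarrow> 'a op \<Rightarrow> complex" where
  "tr I A = (\<Sum>i\<in>I. A i i)"

definition mmult :: "'a set \<Rightarrow> 'a op \<Rightarrow> 'a op \<Rightarrow> 'a op" where
  "mmult I A B = (\<lambda>i k. \<Sum>j\<in>I. A i j * B j k)"

definition psd :: "'a set \<Rightarrow> 'a op \<Rightarrow> bool" where
  "psd I A \<longleftrightarrow> (\<forall>i\<in>I. \<forall>j\<in>I. A i j = cnj (A j i)) \<and>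
     (\<forall>v :: 'a \<Rightarrow> complex. \<exists>r::real. r \<ge> 0 \<and>
        (\<Sum>i\<in>I. \<Sum>j\<in>I. cnj (v i) * A i j * v j) = of_real r)"

definition density :: "'a set \<Rightarrow> 'a op \<Rightarrow> bool" where
  "density I \<rho> \<longleftrightarrow> psd I \<rho> \<and> tr I \<rho> = 1"

definition ensemble :: "'a set \<Rightarrow> 'k set \<Rightarrow> ('k \<Rightarrow> real) \<Rightarrow> ('k \<Rightarrow> 'a op) \<Rightarrow> bool" where
  "ensemble I K \<eta> \<rho> \<longleftrightarrow> finite I \<and> I \<noteq> {} \<and> finite K \<and> K \<noteq> {} \<and>
     (\<forall>k\<in>K. \<eta> k > 0 \<and> density I (\<rho> k)) \<and> (\<Sum>k\<in>K. \<eta> k) = 1"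

definition avg_state :: "'k set \<Rightarrow> ('k \<Rightarrow> real) \<Rightarrow> ('k \<Rightarrow> 'a op) \<Rightarrow> 'a op" where
  "avg_state K \<eta> \<rho> = (\<lambda>a b. \<Sum>k\<in>K. of_real (\<eta> k) * \<rho> k a b)"

text \<open>A POVM with outcomes None (inconclusive, M_?) and Some k (guess rho_k).\<close>
definition povm :: "'a set \<Rightarrow> 'k set \<Rightarrow> ('k option \<Rightarrow> 'a op) \<Rightarrow> bool" where
  "povm I K M \<longleftrightarrow> (\<forall>u\<in>insert None (Some ` K). psd I (M u)) \<and>
     (\<forall>i\<in>I. \<forall>j\<in>I. (\<Sum>u\<in>insert None (Some ` K). M u i j) = (if i = j then 1 else 0))"

definition max_conf :: "'a set \<Rightarrow> 'k set \<Rightarrow> ('k \<Rightarrow> real) \<Rightarrow> ('k \<Rightarrow> 'a op) \<Rightarrow> 'k \<Rightarrow> real" where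
  "max_conf I K \<eta> \<rho> x = Sup {\<eta> x * Re (tr I (mmult I (\<rho> x) (M (Some x))))
        / Re (tr I (mmult I (avg_state K \<eta> \<rho>) (M (Some x)))) | M.
      povm I K M \<and> Re (tr I (mmult I (avg_state K \<eta> \<rho>) (M (Some x)))) > 0}"

text \<open>Tensor-product (sequence) ensemble of L ensembles indexed by l = 1..L.
  Basis of the tensor space: functions a with a l in I l; labels: c with c l in K l.\<close>
definition seq_basis :: "nat \<Rightarrow> (nat \<Rightarrow> 'a set) \<Rightarrow> (nat \<Rightarrow> 'a) set" where
  "seq_basis L I = PiE {1..L} I"

definition seq_labels :: "nat \<Rightarrow> (nat \<Rightarrow> 'k set) \<Rightarrow> (nat \<Rightarrow> 'k) set" where
  "seq_labels L K = PiE {1..L} K"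

definition seq_prob :: "nat \<Rightarrow> (nat \<Rightarrow> 'k \<Rightarrow> real) \<Rightarrow> (nat \<Rightarrow> 'k) \<Rightarrow> real" where
  "seq_prob L \<eta> c = (\<Prod>l\<in>{1..L}. \<eta> l (c l))"

definition seq_state :: "nat \<Rightarrow> (nat \<Rightarrow> 'k \<Rightarrow> 'a op) \<Rightarrow> (nat \<Rightarrow> 'k) \<Rightarrow> (nat \<Rightarrow> 'a) op" where
  "seq_state L \<rho> c = (\<lambda>a b. \<Prod>l\<in>{1..L}. \<rho> l (c l) (a l) (b l))"

end

theory Submission
  imports Defs
begin

definition qf :: "'a set \<Rightarrow> 'a op \<Rightarrow> ('a \<Rightarrow> complex) \<Rightarrow> complex" where
  "qf I A v = (\<Sum>i\<in>I. \<Sum>j\<in>I. cnj (v i) * A i j * v j)"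

definition herm :: "'a set \<Rightarrow> 'a op \<Rightarrow> bool" where
  "herm I A \<longleftrightarrow> (\<forall>i\<in>I. \<forall>j\<in>I. A i j = cnj (A j i))"

lemma ex_nonneg_real: "(\<exists>r::real. r \<ge> 0 \<and> z = of_real r) \<longleftrightarrow> Im z = 0 \<and> Re z \<ge> 0"
proof
  assume "Im z = 0 \<and> Re z \<ge> 0"
  then show "\<exists>r::real. r \<ge> 0 \<and> z = of_real r"
    by (intro exI[of _ "Re z"]) (simp add: complex_eq_iff)
qed auto

lemma psd_alt:
  "psd I A \<longleftrightarrow> herm I A \<and> (\<forall>v. Im (qf I A v) = 0 \<and> Re (qf I A v) \<ge> 0)"
  unfolding psd_def herm_def qf_def ex_nonneg_real by simp

lemma psd_qf_real: "psd I A \<Longrightarrow> Im (qf I A v) = 0"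
  unfolding psd_alt by auto

lemma psd_qf_nonneg: "psd I A \<Longrightarrow> Re (qf I A v) \<ge> 0"
  unfolding psd_alt by auto

lemma psd_herm: "psd I A \<Longrightarrow> herm I A"
  unfolding psd_alt by auto

lemma qf_add: "qf I (\<lambda>i j. A i j + B i j) v = qf I A v + qf I B v"
  unfolding qf_def by (simp add: algebra_simps sum.distrib)

lemma qf_diff: "qf I (\<lambda>i j. A i j - B i j) v = qf I A v - qf I B v"
  unfolding qf_def by (simp add: algebra_simps sum_subtractf)

lemma qf_scale: "qf I (\<lambda>i j. c * A i j) v = c * qf I A v"
  unfolding qf_def by (simp add: algebra_simps sum_distrib_left)

lemma qf_sum: "qf I (\<lambda>i j. \<Sum>k\<in>G. A k i j) v = (\<Sum>k\<in>G. qf I (A k) v)"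
proof -
  have "qf I (\<lambda>i j. \<Sum>k\<in>G. A k i j) v = (\<Sum>i\<in>I. \<Sum>j\<in>I. \<Sum>k\<in>G. cnj (v i) * A k i j * v j)"
    unfolding qf_def by (simp add: sum_distrib_left sum_distrib_right)
  also have "\<dots> = (\<Sum>i\<in>I. \<Sum>k\<in>G. \<Sum>j\<in>I. cnj (v i) * A k i j * v j)"
    by (intro sum.cong refl sum.swap)
  also have "\<dots> = (\<Sum>k\<in>G. \<Sum>i\<in>I. \<Sum>j\<in>I. cnj (v i) * A k i j * v j)"
    by (rule sum.swap)
  finally show ?thesis unfolding qf_def .
qed

lemma herm_add: "herm I A \<Longrightarrow> herm I B \<Longrightarrow> herm I (\<lambda>i j. A i j + B i j)"
  unfolding herm_def
proof (intro ballI)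
  fix i j assume "\<forall>i\<in>I. \<forall>j\<in>I. A i j = cnj (A j i)" "\<forall>i\<in>I. \<forall>j\<in>I. B i j = cnj (B j i)" "i \<in> I" "j \<in> I"
  then have "A i j = cnj (A j i)" "B i j = cnj (B j i)" by blast+
  then show "A i j + B i j = cnj (A j i + B j i)" by simp
qed

lemma herm_diff: "herm I A \<Longrightarrow> herm I B \<Longrightarrow> herm I (\<lambda>i j. A i j - B i j)"
  unfolding herm_def
proof (intro ballI)
  fix i j assume "\<forall>i\<in>I. \<forall>j\<in>I. A i j = cnj (A j i)" "\<forall>i\<in>I. \<forall>j\<in>I. B i j = cnj (B j i)" "i \<in> I" "j \<in> I"
  then have "A i j = cnj (A j i)" "B i j = cnj (B j i)" by blast+
  then show "A i j - B i j = cnj (A j i - B j i)" by simp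
qed

lemma herm_scale: "herm I A \<Longrightarrow> herm I (\<lambda>i j. of_real r * A i j)"
  unfolding herm_def
proof (intro ballI)
  fix i j assume "\<forall>i\<in>I. \<forall>j\<in>I. A i j = cnj (A j i)" "i \<in> I" "j \<in> I"
  then have "A i j = cnj (A j i)" by blast
  then show "of_real r * A i j = cnj (of_real r * A j i)" by simp
qed

lemma psd_add: "psd I A \<Longrightarrow> psd I B \<Longrightarrow> psd I (\<lambda>i j. A i j + B i j)"
  unfolding psd_alt[of I "\<lambda>i j. A i j + B i j"]
  by (simp add: herm_add psd_herm qf_add psd_qf_nonneg psd_qf_real)

lemma psd_scale: "psd I A \<Longrightarrow> r \<ge> 0 \<Longrightarrow> psd I (\<lambda>i j. of_real r * A i j)"
  unfolding psd_alt[of I "\<lambda>i j. of_real r * A i j"]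
  by (simp add: herm_scale psd_herm qf_scale psd_qf_nonneg psd_qf_real)

lemma psd_zero: "psd I (\<lambda>i j. 0)"
  unfolding psd_alt herm_def qf_def by simp

lemma psd_sum: "finite G \<Longrightarrow> (\<And>k. k \<in> G \<Longrightarrow> psd I (A k)) \<Longrightarrow> psd I (\<lambda>i j. \<Sum>k\<in>G. A k i j)"
proof (induction G rule: finite_induct)
  case empty
  then show ?case using psd_zero by simp
next
  case (insert a G)
  then show ?case using psd_add[of I "A a" "\<lambda>i j. \<Sum>k\<in>G. A k i j"] by simp
qed


lemma gram_psd:
  assumes "finite G" and "\<And>i j. i \<in> I \<Longrightarrow> j \<in> I \<Longrightarrow> A i j = (\<Sum>k\<in>G. u k i * cnj (u k j))"
  shows "psd I A"
proof -
  have hA: "herm I A" unfolding herm_def using assms(2) by (simp add: mult.commute)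
  have "qf I A v = of_real (\<Sum>k\<in>G. (cmod (\<Sum>i\<in>I. cnj (v i) * u k i))\<^sup>2)" for v
  proof -
    have "qf I A v = (\<Sum>i\<in>I. \<Sum>j\<in>I. \<Sum>k\<in>G. cnj (v i) * u k i * (cnj (u k j) * v j))"
      unfolding qf_def using assms(2) by (simp add: sum_distrib_left sum_distrib_right algebra_simps)
    also have "\<dots> = (\<Sum>i\<in>I. \<Sum>k\<in>G. \<Sum>j\<in>I. cnj (v i) * u k i * (cnj (u k j) * v j))"
      by (intro sum.cong refl sum.swap)
    also have "\<dots> = (\<Sum>k\<in>G. \<Sum>i\<in>I. \<Sum>j\<in>I. cnj (v i) * u k i * (cnj (u k j) * v j))"
      by (rule sum.swap)
    also have "\<dots> = (\<Sum>k\<in>G. (\<Sum>i\<in>I. cnj (v i) * u k i) * (\<Sum>j\<in>I. cnj (u k j) * v j))"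
      by (simp add: sum_product)
    also have "\<dots> = (\<Sum>k\<in>G. (\<Sum>i\<in>I. cnj (v i) * u k i) * cnj (\<Sum>i\<in>I. cnj (v i) * u k i))"
      by (simp add: mult.commute)
    also have "\<dots> = of_real (\<Sum>k\<in>G. (cmod (\<Sum>i\<in>I. cnj (v i) * u k i))\<^sup>2)"
      by (simp only: of_real_sum complex_norm_square)
    finally show ?thesis .
  qed
  then show ?thesis unfolding psd_alt using hA by (simp add: sum_nonneg)
qed

lemma qf_unit:
  assumes "finite I" "a \<in> I"
  shows "qf I B (\<lambda>i. if i = a then 1 else 0) = B a a"
proof -
  have "qf I B (\<lambda>i. if i = a then 1 else 0) = (\<Sum>i\<in>I. if i = a then (\<Sum>j\<in>I. if j = a then B a a else 0) else 0)"
    unfolding qf_def by (intro sum.cong refl) (auto intro!: sum.cong)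
  also have "\<dots> = B a a" using assms by simp
  finally show ?thesis .
qed

lemma sum_delta_r:
  assumes "finite I" "a \<in> I"
  shows "(\<Sum>j\<in>I. f j * (if j = a then t else 0)) = f a * (t::complex)"
proof -
  have "(\<Sum>j\<in>I. f j * (if j = a then t else 0)) = (\<Sum>j\<in>I. if j = a then f a * t else 0)"
    by (intro sum.cong) auto
  then show ?thesis using assms by simp
qed

lemma sum_delta_l:
  assumes "finite I" "a \<in> I"
  shows "(\<Sum>j\<in>I. (if j = a then t else 0) * f j) = (t::complex) * f a"
proof -
  have "(\<Sum>j\<in>I. (if j = a then t else 0) * f j) = (\<Sum>j\<in>I. if j = a then t * f a else 0)"
    by (intro sum.cong) auto
  then show ?thesis using assms by simp
qed

lemma qf_shift:
  assumes "finite I" "a \<in> I"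
  shows "qf I B (\<lambda>i. v i + (if i = a then t else 0)) =
     qf I B v + t * (\<Sum>i\<in>I. cnj (v i) * B i a) + cnj t * (\<Sum>j\<in>I. B a j * v j) + cnj t * t * B a a"
proof -
  have "qf I B (\<lambda>i. v i + (if i = a then t else 0)) =
     (\<Sum>i\<in>I. \<Sum>j\<in>I. cnj (v i) * B i j * v j + cnj (v i) * B i j * (if j = a then t else 0)
        + (if i = a then cnj t else 0) * B i j * v j + (if i = a then cnj t else 0) * B i j * (if j = a then t else 0))"
    unfolding qf_def by (intro sum.cong refl) (simp add: algebra_simps)
  also have "\<dots> = qf I B v + (\<Sum>i\<in>I. \<Sum>j\<in>I. cnj (v i) * B i j * (if j = a then t else 0))
        + (\<Sum>i\<in>I. \<Sum>j\<in>I. (if i = a then cnj t else 0) * B i j * v j)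
        + (\<Sum>i\<in>I. \<Sum>j\<in>I. (if i = a then cnj t else 0) * B i j * (if j = a then t else 0))"
    unfolding qf_def by (simp add: sum.distrib)
  also have "\<dots> = qf I B v + t * (\<Sum>i\<in>I. cnj (v i) * B i a) + cnj t * (\<Sum>j\<in>I. B a j * v j) + cnj t * t * B a a"
  proof -
    have s1: "(\<Sum>i\<in>I. \<Sum>j\<in>I. cnj (v i) * B i j * (if j = a then t else 0)) = t * (\<Sum>i\<in>I. cnj (v i) * B i a)"
    proof -
      have "(\<Sum>i\<in>I. \<Sum>j\<in>I. cnj (v i) * B i j * (if j = a then t else 0)) = (\<Sum>i\<in>I. cnj (v i) * B i a * t)"
        by (intro sum.cong refl sum_delta_r assms)
      also have "\<dots> = t * (\<Sum>i\<in>I. cnj (v i) * B i a)" by (simp add: sum_distrib_left ac_simps)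
      finally show ?thesis .
    qed
    have s2: "(\<Sum>i\<in>I. \<Sum>j\<in>I. (if i = a then cnj t else 0) * B i j * v j) = cnj t * (\<Sum>j\<in>I. B a j * v j)"
    proof -
      have "(\<Sum>i\<in>I. \<Sum>j\<in>I. (if i = a then cnj t else 0) * B i j * v j) = (\<Sum>i\<in>I. (if i = a then cnj t else 0) * (\<Sum>j\<in>I. B i j * v j))"
        by (simp add: sum_distrib_left mult.assoc)
      also have "\<dots> = cnj t * (\<Sum>j\<in>I. B a j * v j)" using assms by (rule sum_delta_l)
      finally show ?thesis .
    qed
    have s3: "(\<Sum>i\<in>I. \<Sum>j\<in>I. (if i = a then cnj t else 0) * B i j * (if j = a then t else 0)) = cnj t * t * B a a"
    proof -
      have "(\<Sum>i\<in>I. \<Sum>j\<in>I. (if i = a then cnj t else 0) * B i j * (if j = a then t else 0)) = (\<Sum>i\<in>I. (if i = a then cnj t else 0) * B i a * t)"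
        by (intro sum.cong refl sum_delta_r assms)
      also have "\<dots> = (\<Sum>i\<in>I. (if i = a then cnj t else 0) * (B i a * t))" by (simp add: mult.assoc)
      also have "\<dots> = cnj t * (B a a * t)" using assms by (rule sum_delta_l)
      finally show ?thesis by simp
    qed
    show ?thesis using s1 s2 s3 by simp
  qed
  finally show ?thesis .
qed

lemma sum_two:
  assumes "finite I" "a \<in> I" "b \<in> I" "a \<noteq> b" "\<And>i. i \<in> I \<Longrightarrow> i \<noteq> a \<Longrightarrow> i \<noteq> b \<Longrightarrow> f i = 0"
  shows "(\<Sum>i\<in>I. f i) = f a + f b"
proof -
  have "(\<Sum>i\<in>I. f i) = (\<Sum>i\<in>{a,b}. f i)"
    using assms by (intro sum.mono_neutral_right) auto
  then show ?thesis using assms by simp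
qed

lemma psd_zero_diag:
  assumes "finite I" "psd I B" "a \<in> I" "j \<in> I" "B a a = 0"
  shows "B a j = 0"
proof (rule ccontr)
  assume ne: "B a j \<noteq> 0"
  then have aj: "a \<noteq> j" using assms(5) by auto
  have h: "herm I B" using assms psd_herm by blast
  have Bja: "B j a = cnj (B a j)" using h assms(3,4) unfolding herm_def by blast
  define m where "m = (cmod (B a j))\<^sup>2"
  have m0: "m > 0" using ne unfolding m_def by simp
  have djj: "Re (B j j) \<ge> 0"
    using psd_qf_nonneg[OF assms(2), of "\<lambda>i. if i = j then 1 else 0"] qf_unit[OF assms(1,4)] by simp
  define t where "t = (Re (B j j) + 1) / m"
  define s where "s = - of_real t * B a j"
  define v where "v = (\<lambda>i. if i = a then s else if i = j then 1 else (0::complex))"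
  have inner: "(\<Sum>k\<in>I. cnj (v i) * B i k * v k) = cnj (v i) * B i a * s + cnj (v i) * B i j" for i
    using sum_two[OF assms(1,3,4) aj, of "\<lambda>k. cnj (v i) * B i k * v k"] aj unfolding v_def by auto
  have "qf I B v = (cnj s * B a a * s + cnj s * B a j) + (B j a * s + B j j)"
    unfolding qf_def inner
    using sum_two[OF assms(1,3,4) aj, of "\<lambda>i. cnj (v i) * B i a * s + cnj (v i) * B i j"] aj
    unfolding v_def by auto
  also have "\<dots> = B j j - of_real t * (cnj (B a j) * B a j) - of_real t * (cnj (B a j) * B a j)"
    by (simp add: s_def Bja assms(5) algebra_simps)
  also have "\<dots> = B j j - of_real (2 * t * m)"
    using complex_norm_square[of "B a j"] unfolding m_def by (simp add: mult.commute)
  finally have "Re (qf I B v) = Re (B j j) - 2 * t * m" by simp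
  also have "\<dots> = - Re (B j j) - 2" unfolding t_def using m0 by simp
  also have "\<dots> < 0" using djj by simp
  finally show False using psd_qf_nonneg[OF assms(2)] by (metis not_le)
qed


lemma herm_at: "herm I B \<Longrightarrow> i \<in> I \<Longrightarrow> j \<in> I \<Longrightarrow> B i j = cnj (B j i)"
  unfolding herm_def by blast

lemma psd_diag_real:
  assumes "finite I" "psd I B" "a \<in> I"
  shows "B a a = of_real (Re (B a a))" "Re (B a a) \<ge> 0"
proof -
  have "Im (B a a) = 0" using psd_qf_real[OF assms(2), of "\<lambda>i. if i = a then 1 else 0"] qf_unit[OF assms(1,3)] by simp
  then show "B a a = of_real (Re (B a a))" by (simp add: complex_eq_iff)
  show "Re (B a a) \<ge> 0" using psd_qf_nonneg[OF assms(2), of "\<lambda>i. if i = a then 1 else 0"] qf_unit[OF assms(1,3)] by simp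
qed

lemma schur_step:
  assumes fin: "finite I" and psd: "psd I B" and aI: "a \<in> I" and d: "B a a = of_real d" and d0: "d > 0"
  shows "psd I (\<lambda>i j. B i j - B i a * B a j / of_real d)"
proof -
  have h: "herm I B" using psd psd_herm by blast
  define B' where "B' = (\<lambda>i j. B i j - B i a * B a j / of_real d)"
  have hB': "herm I B'"
    unfolding herm_def B'_def
  proof (intro ballI)
    fix i j assume i: "i \<in> I" and j: "j \<in> I"
    have "B i j = cnj (B j i)" "B j a = cnj (B a j)" "B a i = cnj (B i a)"
      using herm_at[OF h] i j aI by blast+
    then show "B i j - B i a * B a j / of_real d = cnj (B j i - B j a * B a i / of_real d)"
      by (simp add: mult.commute)
  qed
  have "Im (qf I B' v) = 0 \<and> Re (qf I B' v) \<ge> 0" for v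
  proof -
    define p where "p = (\<Sum>j\<in>I. B a j * v j)"
    define q where "q = (\<Sum>i\<in>I. cnj (v i) * B i a)"
    have qp: "q = cnj p"
    proof -
      have "cnj p = (\<Sum>j\<in>I. cnj (B a j) * cnj (v j))" unfolding p_def by simp
      also have "\<dots> = (\<Sum>j\<in>I. cnj (v j) * B j a)"
      proof (intro sum.cong refl)
        fix j assume j: "j \<in> I"
        have "B j a = cnj (B a j)" using herm_at[OF h j aI] .
        then show "cnj (B a j) * cnj (v j) = cnj (v j) * B j a" by (simp add: mult.commute)
      qed
      finally show ?thesis unfolding q_def by simp
    qed
    have W: "qf I (\<lambda>i j. B i a * B a j / of_real d) v = q * p / of_real d"
    proof -
      have "qf I (\<lambda>i j. B i a * B a j / of_real d) v = (\<Sum>i\<in>I. \<Sum>j\<in>I. (cnj (v i) * B i a) * (B a j * v j) / of_real d)"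
        unfolding qf_def by (intro sum.cong refl) (simp add: ac_simps)
      also have "\<dots> = q * p / of_real d"
        unfolding p_def q_def by (simp add: sum_product sum_divide_distrib)
      finally show ?thesis .
    qed
    define t where "t = - p / of_real d"
    have "qf I B (\<lambda>i. v i + (if i = a then t else 0)) = qf I B v + t * q + cnj t * p + cnj t * t * B a a"
      using qf_shift[OF fin aI, of B v t] unfolding p_def q_def by simp
    also have "\<dots> = qf I B v - q * p / of_real d"
      unfolding t_def d qp using d0 by (simp add: field_simps)
    also have "\<dots> = qf I B' v"
      unfolding B'_def qf_diff W ..
    finally have e: "qf I B' v = qf I B (\<lambda>i. v i + (if i = a then t else 0))" by simp
    show ?thesis unfolding e using psd_qf_real[OF psd] psd_qf_nonneg[OF psd] by simp
  qed
  then show ?thesis unfolding psd_alt B'_def[symmetric] using hB' by simp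
qed

lemma psd_decomp_aux:
  assumes "finite J" "finite I"
  shows "J \<subseteq> I \<Longrightarrow> psd I B \<Longrightarrow> (\<forall>i\<in>I. \<forall>j\<in>I. (i \<notin> J \<or> j \<notin> J) \<longrightarrow> B i j = 0) \<Longrightarrow>
    \<exists>n w. \<forall>i\<in>I. \<forall>j\<in>I. B i j = (\<Sum>k<(n::nat). w k i * cnj (w k j))"
  using assms(1)
proof (induction J arbitrary: B rule: finite_induct)
  case empty
  have z: "\<forall>i\<in>I. \<forall>j\<in>I. B i j = 0" using empty by auto
  show ?case
    apply (rule exI[where x=0])
    apply (rule exI[where x="\<lambda>k i. 0"])
    using z by simp
next
  case (insert a J)
  have aI: "a \<in> I" and JI: "J \<subseteq> I" using insert.prems by auto
  have h: "herm I B" using insert.prems psd_herm by blast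
  have van: "B i j = 0" if "i \<in> I" "j \<in> I" "i \<notin> insert a J \<or> j \<notin> insert a J" for i j
    using insert.prems(3) that by blast
  show ?case
  proof (cases "B a a = 0")
    case True
    have row: "B a j = 0" if "j \<in> I" for j using psd_zero_diag[OF assms(2) insert.prems(2) aI that True] .
    have col: "B i a = 0" if "i \<in> I" for i using herm_at[OF h that aI] row[OF that] by simp
    have "\<forall>i\<in>I. \<forall>j\<in>I. (i \<notin> J \<or> j \<notin> J) \<longrightarrow> B i j = 0"
    proof (intro ballI impI)
      fix i j assume i: "i \<in> I" and j: "j \<in> I" and o: "i \<notin> J \<or> j \<notin> J"
      show "B i j = 0"
      proof (cases "i = a \<or> j = a")
        case True then show ?thesis using row col i j by auto
      next
        case False then show ?thesis using van[OF i j] o by blast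
      qed
    qed
    then show ?thesis using insert.IH[OF JI insert.prems(2)] by blast
  next
    case False
    define d where "d = Re (B a a)"
    have Bd: "B a a = of_real d" unfolding d_def using psd_diag_real[OF assms(2) insert.prems(2) aI] by simp
    have d0: "d > 0" using psd_diag_real(2)[OF assms(2) insert.prems(2) aI] False Bd unfolding d_def
      by (metis less_eq_real_def of_real_0)
    define B' where "B' = (\<lambda>i j. B i j - B i a * B a j / of_real d)"
    have pB': "psd I B'" unfolding B'_def by (rule schur_step[OF assms(2) insert.prems(2) aI Bd d0])
    have "\<forall>i\<in>I. \<forall>j\<in>I. (i \<notin> J \<or> j \<notin> J) \<longrightarrow> B' i j = 0"
    proof (intro ballI impI)
      fix i j assume i: "i \<in> I" and j: "j \<in> I" and o: "i \<notin> J \<or> j \<notin> J"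
      show "B' i j = 0"
      proof (cases "i = a")
        case True then show ?thesis unfolding B'_def using Bd d0 by simp
      next
        case ia: False
        show ?thesis
        proof (cases "j = a")
          case True then show ?thesis unfolding B'_def using Bd d0 by simp
        next
          case ja: False
          have "B i j = 0" using van[OF i j] o ia ja by blast
          moreover have "B i a = 0 \<or> B a j = 0"
            using van[OF i aI] van[OF aI j] o ia ja by blast
          ultimately show ?thesis unfolding B'_def by auto
        qed
      qed
    qed
    then obtain n :: nat and w where nw: "\<forall>i\<in>I. \<forall>j\<in>I. B' i j = (\<Sum>k<n. w k i * cnj (w k j))"
      using insert.IH[OF JI pB'] by blast
    define w0 where "w0 = (\<lambda>i. B i a / of_real (sqrt d))"
    define w' where "w' = w(n := w0)"
    have "\<forall>i\<in>I. \<forall>j\<in>I. B i j = (\<Sum>k<Suc n. w' k i * cnj (w' k j))"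
    proof (intro ballI)
      fix i j assume i: "i \<in> I" and j: "j \<in> I"
      have s: "(\<Sum>k<n. w' k i * cnj (w' k j)) = (\<Sum>k<n. w k i * cnj (w k j))"
        unfolding w'_def by (intro sum.cong) auto
      have c: "cnj (B j a) = B a j" using herm_at[OF h aI j] by simp
      have "sqrt d * sqrt d = d" using d0 by simp
      then have sq: "of_real (sqrt d) * of_real (sqrt d) = (of_real d :: complex)"
        by (metis of_real_mult)
      have "w0 i * cnj (w0 j) = B i a * cnj (B j a) / (of_real (sqrt d) * of_real (sqrt d))"
        unfolding w0_def by simp
      also have "\<dots> = B i a * B a j / of_real d" unfolding c sq ..
      finally have "w0 i * cnj (w0 j) = B i a * B a j / of_real d" .
      then show "B i j = (\<Sum>k<Suc n. w' k i * cnj (w' k j))"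
      proof -
        have "B i j - B i a * B a j / of_real d = (\<Sum>k<n. w k i * cnj (w k j))"
          using nw i j unfolding B'_def by blast
        then show ?thesis using s \<open>w0 i * cnj (w0 j) = B i a * B a j / of_real d\<close>
          by (simp add: w'_def algebra_simps)
      qed
    qed
    then show ?thesis by blast
  qed
qed

lemma psd_decomp:
  assumes "finite I" "psd I B"
  shows "\<exists>n w. \<forall>i\<in>I. \<forall>j\<in>I. B i j = (\<Sum>k<(n::nat). w k i * cnj (w k j))"
  using psd_decomp_aux[OF assms(1) assms(1) order_refl assms(2)] by blast

lemma tr_decomp:
  assumes "finite I" "\<forall>i\<in>I. \<forall>j\<in>I. M i j = (\<Sum>k<(n::nat). w k i * cnj (w k j))"
  shows "tr I (mmult I A M) = (\<Sum>k<n. qf I A (w k))"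
proof -
  have "tr I (mmult I A M) = (\<Sum>i\<in>I. \<Sum>j\<in>I. \<Sum>k<n. cnj (w k i) * A i j * w k j)"
    unfolding tr_def mmult_def using assms(2)
    by (intro sum.cong refl) (simp add: sum_distrib_left ac_simps)
  also have "\<dots> = (\<Sum>i\<in>I. \<Sum>k<n. \<Sum>j\<in>I. cnj (w k i) * A i j * w k j)"
    by (intro sum.cong refl sum.swap)
  also have "\<dots> = (\<Sum>k<n. \<Sum>i\<in>I. \<Sum>j\<in>I. cnj (w k i) * A i j * w k j)"
    by (rule sum.swap)
  finally show ?thesis unfolding qf_def .
qed

lemma tr_psd:
  assumes "finite I" "psd I A" "psd I M"
  shows "Im (tr I (mmult I A M)) = 0" "Re (tr I (mmult I A M)) \<ge> 0"
proof -
  obtain n :: nat and w where "\<forall>i\<in>I. \<forall>j\<in>I. M i j = (\<Sum>k<n. w k i * cnj (w k j))"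
    using psd_decomp[OF assms(1,3)] by blast
  then have e: "tr I (mmult I A M) = (\<Sum>k<n. qf I A (w k))" by (rule tr_decomp[OF assms(1)])
  show "Im (tr I (mmult I A M)) = 0" unfolding e using psd_qf_real[OF assms(2)] by simp
  show "Re (tr I (mmult I A M)) \<ge> 0" unfolding e using psd_qf_nonneg[OF assms(2)] by (simp add: sum_nonneg)
qed


lemma tensor_psd:
  assumes F: "finite F" and fin: "\<And>l. l \<in> F \<Longrightarrow> finite (I l)" and P: "\<And>l. l \<in> F \<Longrightarrow> psd (I l) (P l)"
  shows "psd (PiE F I) (\<lambda>a b. \<Prod>l\<in>F. P l (a l) (b l))"
proof -
  have "\<forall>l\<in>F. \<exists>p. \<forall>i\<in>I l. \<forall>j\<in>I l. P l i j = (\<Sum>k<(fst p::nat). snd p k i * cnj (snd p k j))"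
  proof
    fix l assume l: "l \<in> F"
    obtain n :: nat and w where "\<forall>i\<in>I l. \<forall>j\<in>I l. P l i j = (\<Sum>k<n. w k i * cnj (w k j))"
      using psd_decomp[OF fin[OF l] P[OF l]] by blast
    then show "\<exists>p. \<forall>i\<in>I l. \<forall>j\<in>I l. P l i j = (\<Sum>k<(fst p::nat). snd p k i * cnj (snd p k j))"
      by (intro exI[of _ "(n, w)"]) simp
  qed
  then obtain p where p: "\<forall>l\<in>F. \<forall>i\<in>I l. \<forall>j\<in>I l. P l i j = (\<Sum>k<(fst (p l)::nat). snd (p l) k i * cnj (snd (p l) k j))"
    by (metis bchoice)
  define N where "N = (\<lambda>l. fst (p l))"
  define W where "W = (\<lambda>l. snd (p l))"
  define u where "u = (\<lambda>(\<kappa>::_ \<Rightarrow> nat) a. \<Prod>l\<in>F. W l (\<kappa> l) (a l))"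
  show ?thesis
  proof (rule gram_psd[where G = "PiE F (\<lambda>l. {..<N l})" and u = u])
    show "finite (PiE F (\<lambda>l. {..<N l}))" using F by (simp add: finite_PiE)
  next
    fix a b assume a: "a \<in> PiE F I" and b: "b \<in> PiE F I"
    have "(\<Prod>l\<in>F. P l (a l) (b l)) = (\<Prod>l\<in>F. \<Sum>k<N l. W l k (a l) * cnj (W l k (b l)))"
      using p a b unfolding N_def W_def by (intro prod.cong refl) (auto simp: PiE_iff)
    also have "\<dots> = (\<Sum>\<kappa>\<in>PiE F (\<lambda>l. {..<N l}). \<Prod>l\<in>F. W l (\<kappa> l) (a l) * cnj (W l (\<kappa> l) (b l)))"
      using F by (rule prod_sum_PiE) simp
    also have "\<dots> = (\<Sum>\<kappa>\<in>PiE F (\<lambda>l. {..<N l}). u \<kappa> a * cnj (u \<kappa> b))"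
      unfolding u_def by (simp add: prod.distrib cnj_prod)
    finally show "(\<Prod>l\<in>F. P l (a l) (b l)) = (\<Sum>\<kappa>\<in>PiE F (\<lambda>l. {..<N l}). u \<kappa> a * cnj (u \<kappa> b))" .
  qed
qed

lemma tensor_mmult:
  assumes F: "finite F" and fin: "\<And>l. l \<in> F \<Longrightarrow> finite (I l)"
  shows "mmult (PiE F I) (\<lambda>a b. \<Prod>l\<in>F. X l (a l) (b l)) (\<lambda>a b. \<Prod>l\<in>F. Y l (a l) (b l))
     = (\<lambda>a b. \<Prod>l\<in>F. mmult (I l) (X l) (Y l) (a l) (b l))"
proof (intro ext)
  fix a b
  have "mmult (PiE F I) (\<lambda>a b. \<Prod>l\<in>F. X l (a l) (b l)) (\<lambda>a b. \<Prod>l\<in>F. Y l (a l) (b l)) a b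
     = (\<Sum>c\<in>PiE F I. \<Prod>l\<in>F. X l (a l) (c l) * Y l (c l) (b l))"
    unfolding mmult_def by (simp add: prod.distrib)
  also have "\<dots> = (\<Prod>l\<in>F. \<Sum>j\<in>I l. X l (a l) j * Y l j (b l))"
    using prod_sum_PiE[where A=F and B=I and f="\<lambda>l j. X l (a l) j * Y l j (b l)"] F fin by simp
  finally show "mmult (PiE F I) (\<lambda>a b. \<Prod>l\<in>F. X l (a l) (b l)) (\<lambda>a b. \<Prod>l\<in>F. Y l (a l) (b l)) a b
     = (\<Prod>l\<in>F. mmult (I l) (X l) (Y l) (a l) (b l))" unfolding mmult_def .
qed

lemma tensor_tr:
  assumes F: "finite F" and fin: "\<And>l. l \<in> F \<Longrightarrow> finite (I l)"
  shows "tr (PiE F I) (mmult (PiE F I) (\<lambda>a b. \<Prod>l\<in>F. X l (a l) (b l)) (\<lambda>a b. \<Prod>l\<in>F. Y l (a l) (b l)))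
     = (\<Prod>l\<in>F. tr (I l) (mmult (I l) (X l) (Y l)))"
proof -
  have "tr (PiE F I) (mmult (PiE F I) (\<lambda>a b. \<Prod>l\<in>F. X l (a l) (b l)) (\<lambda>a b. \<Prod>l\<in>F. Y l (a l) (b l)))
     = tr (PiE F I) (\<lambda>a b. \<Prod>l\<in>F. mmult (I l) (X l) (Y l) (a l) (b l))"
    using tensor_mmult[where X=X and Y=Y, OF assms] by simp
  also have "\<dots> = (\<Sum>a\<in>PiE F I. \<Prod>l\<in>F. mmult (I l) (X l) (Y l) (a l) (a l))"
    unfolding tr_def ..
  also have "\<dots> = (\<Prod>l\<in>F. tr (I l) (mmult (I l) (X l) (Y l)))"
    unfolding tr_def using prod_sum_PiE[where A=F and B=I and f="\<lambda>l i. mmult (I l) (X l) (Y l) i i"] F fin by simp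
  finally show ?thesis .
qed

lemma telescope:
  assumes F: "finite F" and fin: "\<And>l. l \<in> F \<Longrightarrow> finite (I l)"
    and A: "\<And>l. l \<in> F \<Longrightarrow> psd (I l) (A l)"
    and BA: "\<And>l. l \<in> F \<Longrightarrow> psd (I l) (\<lambda>i j. B l i j - A l i j)"
  shows "psd (PiE F I) (\<lambda>a b. (\<Prod>l\<in>F. B l (a l) (b l)) - (\<Prod>l\<in>F. A l (a l) (b l)))"
proof -
  have Bp: "psd (I l) (B l)" if "l \<in> F" for l
    using psd_add[OF A[OF that] BA[OF that]] by simp
  define T where "T = (\<lambda>S a b. \<Prod>l\<in>F. (if l \<in> S then B l else A l) (a l) (b l))"
  have "S \<subseteq> F \<Longrightarrow> psd (PiE F I) (\<lambda>a b. T S a b - T {} a b)" for S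
  proof (induction S rule: infinite_finite_induct)
    case (infinite S)
    then show ?case using finite_subset[OF _ F] by blast
  next
    case empty
    then show ?case using psd_zero by simp
  next
    case (insert k S)
    have kF: "k \<in> F" and SF: "S \<subseteq> F" using insert.prems by auto
    define P where "P = (\<lambda>l. if l = k then (\<lambda>i j. B k i j - A k i j) else (if l \<in> S then B l else A l))"
    have "T (insert k S) a b - T S a b = (\<Prod>l\<in>F. P l (a l) (b l))" for a b
    proof -
      define R where "R = (\<Prod>l\<in>F - {k}. (if l \<in> S then B l else A l) (a l) (b l))"
      have R1: "(\<Prod>l\<in>F - {k}. (if l \<in> insert k S then B l else A l) (a l) (b l)) = R"
        unfolding R_def by (intro prod.cong refl) auto
      have R2: "(\<Prod>l\<in>F - {k}. P l (a l) (b l)) = R"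
        unfolding R_def P_def by (intro prod.cong refl) auto
      have "T (insert k S) a b = B k (a k) (b k) * R"
        unfolding T_def using prod.remove[OF F kF, of "\<lambda>l. (if l \<in> insert k S then B l else A l) (a l) (b l)"] R1 by simp
      moreover have "T S a b = A k (a k) (b k) * R"
        unfolding T_def R_def using prod.remove[OF F kF, of "\<lambda>l. (if l \<in> S then B l else A l) (a l) (b l)"] insert.hyps by simp
      moreover have "(\<Prod>l\<in>F. P l (a l) (b l)) = (B k (a k) (b k) - A k (a k) (b k)) * R"
        using prod.remove[OF F kF, of "\<lambda>l. P l (a l) (b l)"] R2 by (simp add: P_def)
      ultimately show ?thesis by (simp add: algebra_simps)
    qed
    moreover have "psd (PiE F I) (\<lambda>a b. \<Prod>l\<in>F. P l (a l) (b l))"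
      by (rule tensor_psd[OF F fin]) (auto simp: P_def BA A Bp)
    ultimately have "psd (PiE F I) (\<lambda>a b. T (insert k S) a b - T S a b)" by simp
    from psd_add[OF this insert.IH[OF SF]] show ?case by simp
  qed
  from this[OF order_refl] show ?thesis unfolding T_def by simp
qed


definition Idm :: "'a op" where "Idm = (\<lambda>i j. if i = j then 1 else 0)"

definition conf_set :: "'a set \<Rightarrow> 'k set \<Rightarrow> ('k \<Rightarrow> real) \<Rightarrow> ('k \<Rightarrow> 'a op) \<Rightarrow> 'k \<Rightarrow> real set" where
  "conf_set I K \<eta> \<rho> x = {\<eta> x * Re (tr I (mmult I (\<rho> x) (M (Some x))))
        / Re (tr I (mmult I (avg_state K \<eta> \<rho>) (M (Some x)))) | M.
      povm I K M \<and> Re (tr I (mmult I (avg_state K \<eta> \<rho>) (M (Some x)))) > 0}"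

lemma max_conf_Sup: "max_conf I K \<eta> \<rho> x = Sup (conf_set I K \<eta> \<rho> x)"
  unfolding max_conf_def conf_set_def ..

lemma psd_cong:
  assumes "\<And>i j. i \<in> I \<Longrightarrow> j \<in> I \<Longrightarrow> A i j = B i j"
  shows "psd I A = psd I B"
proof -
  have "(\<Sum>i\<in>I. \<Sum>j\<in>I. cnj (v i) * A i j * v j) = (\<Sum>i\<in>I. \<Sum>j\<in>I. cnj (v i) * B i j * v j)" for v
    using assms by (intro sum.cong refl) simp
  moreover have "(\<forall>i\<in>I. \<forall>j\<in>I. A i j = cnj (A j i)) = (\<forall>i\<in>I. \<forall>j\<in>I. B i j = cnj (B j i))"
    using assms by auto
  ultimately show ?thesis unfolding psd_def by simp
qed

lemma psd_Idm:
  assumes "finite I"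
  shows "psd I Idm"
proof (rule gram_psd[where G = I and u = "\<lambda>k i. if k = i then 1 else 0"])
  show "finite I" by fact
  fix i j assume "i \<in> I" "j \<in> I"
  have "(\<Sum>k\<in>I. (if k = i then 1 else 0) * cnj (if k = j then 1 else (0::complex)))
      = (\<Sum>k\<in>I. if k = i then (if i = j then 1 else 0) else 0)"
    by (intro sum.cong refl) auto
  also have "\<dots> = Idm i j" using assms \<open>i \<in> I\<close> by (simp add: Idm_def)
  finally show "Idm i j = (\<Sum>k\<in>I. (if k = i then 1 else 0) * cnj (if k = j then 1 else 0))" by simp
qed

lemma qf_Idm: "qf I Idm w = of_real (\<Sum>i\<in>I. (cmod (w i))\<^sup>2)"
proof -
  have "qf I Idm w = (\<Sum>i\<in>I. \<Sum>j\<in>I. if j = i then cnj (w i) * w i else 0)"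
    unfolding qf_def Idm_def by (intro sum.cong refl) auto
  also have "\<dots> = (\<Sum>i\<in>I. w i * cnj (w i))"
    by (cases "finite I") (simp_all add: mult.commute)
  also have "\<dots> = of_real (\<Sum>i\<in>I. (cmod (w i))\<^sup>2)"
    by (simp only: of_real_sum complex_norm_square)
  finally show ?thesis .
qed

lemma povm_two:
  assumes fK: "finite K" and x: "x \<in> K" and P: "psd I P" and IP: "psd I (\<lambda>i j. Idm i j - P i j)"
  shows "povm I K (\<lambda>u. if u = Some x then P else if u = None then (\<lambda>i j. Idm i j - P i j) else (\<lambda>i j. 0))"
  unfolding povm_def
proof (intro conjI ballI)
  fix u assume "u \<in> insert None (Some ` K)"
  show "psd I (if u = Some x then P else if u = None then (\<lambda>i j. Idm i j - P i j) else (\<lambda>i j. 0))"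
    using P IP psd_zero by auto
next
  fix i j assume "i \<in> I" "j \<in> I"
  let ?f = "\<lambda>u. (if u = Some x then P else if u = None then (\<lambda>i j. Idm i j - P i j) else (\<lambda>i j. 0)) i j"
  have "(\<Sum>u\<in>insert None (Some ` K). ?f u) = ?f None + (\<Sum>u\<in>Some ` K. ?f u)"
    using fK by (subst sum.insert) auto
  also have "(\<Sum>u\<in>Some ` K. ?f u) = (\<Sum>k\<in>K. ?f (Some k))"
    by (subst sum.reindex) (auto simp: inj_on_def)
  also have "\<dots> = (\<Sum>k\<in>K. if k = x then P i j else 0)"
    by (intro sum.cong refl) auto
  also have "\<dots> = P i j" using fK x by simp
  finally show "(\<Sum>u\<in>insert None (Some ` K). ?f u) = (if i = j then 1 else 0)"
    by (simp add: Idm_def)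
qed

lemma tr_mmult_diff: "tr I (mmult I (\<lambda>a b. X a b - Y a b) M) = tr I (mmult I X M) - tr I (mmult I Y M)"
  unfolding tr_def mmult_def by (simp add: algebra_simps sum_subtractf)

lemma tr_mmult_scale: "tr I (mmult I (\<lambda>a b. c * X a b) M) = c * tr I (mmult I X M)"
  unfolding tr_def mmult_def by (simp add: algebra_simps sum_distrib_left)

lemma tr_mmult_sum: "tr I (mmult I (\<lambda>a b. \<Sum>k\<in>G. X k a b) M) = (\<Sum>k\<in>G. tr I (mmult I (X k) M))"
proof -
  have "tr I (mmult I (\<lambda>a b. \<Sum>k\<in>G. X k a b) M) = (\<Sum>i\<in>I. \<Sum>j\<in>I. \<Sum>k\<in>G. X k i j * M j i)"
    unfolding tr_def mmult_def by (simp add: sum_distrib_right)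
  also have "\<dots> = (\<Sum>i\<in>I. \<Sum>k\<in>G. \<Sum>j\<in>I. X k i j * M j i)"
    by (intro sum.cong refl sum.swap)
  also have "\<dots> = (\<Sum>k\<in>G. \<Sum>i\<in>I. \<Sum>j\<in>I. X k i j * M j i)"
    by (rule sum.swap)
  finally show ?thesis unfolding tr_def mmult_def .
qed

lemma tr_mmult_Idm:
  assumes "finite I"
  shows "tr I (mmult I A Idm) = tr I A"
  unfolding tr_def mmult_def Idm_def
  by (intro sum.cong refl) (simp add: assms if_distrib cong: if_cong)


context
  fixes I :: "'a set" and K :: "'k set" and \<eta> :: "'k \<Rightarrow> real" and \<rho> :: "'k \<Rightarrow> 'a op" and x :: 'k
  assumes ens: "ensemble I K \<eta> \<rho>" and xK: "x \<in> K"
begin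

lemma finI: "finite I" and finK: "finite K" and eta_pos: "k \<in> K \<Longrightarrow> \<eta> k > 0"
  and psd_rho: "k \<in> K \<Longrightarrow> psd I (\<rho> k)" and tr_rho: "k \<in> K \<Longrightarrow> tr I (\<rho> k) = 1"
  and eta_sum: "(\<Sum>k\<in>K. \<eta> k) = 1"
  using ens unfolding ensemble_def density_def by auto

lemma psd_avg: "psd I (avg_state K \<eta> \<rho>)"
proof -
  have "psd I (\<lambda>i j. \<Sum>k\<in>K. (\<lambda>k i j. of_real (\<eta> k) * \<rho> k i j) k i j)"
    by (rule psd_sum[OF finK]) (intro psd_scale psd_rho less_imp_le eta_pos; assumption)
  then show ?thesis unfolding avg_state_def by simp
qed

lemma tr_avg: "tr I (mmult I (avg_state K \<eta> \<rho>) M) = (\<Sum>k\<in>K. of_real (\<eta> k) * tr I (mmult I (\<rho> k) M))"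
  unfolding avg_state_def tr_mmult_sum[where X = "\<lambda>k a b. of_real (\<eta> k) * \<rho> k a b", simplified]
  by (simp add: tr_mmult_scale)

lemma re_tr_avg: "Re (tr I (mmult I (avg_state K \<eta> \<rho>) M)) = (\<Sum>k\<in>K. \<eta> k * Re (tr I (mmult I (\<rho> k) M)))"
  unfolding tr_avg by (simp add: Re_sum)

lemma avg_ge:
  assumes M: "psd I M"
  shows "\<eta> x * Re (tr I (mmult I (\<rho> x) M)) \<le> Re (tr I (mmult I (avg_state K \<eta> \<rho>) M))"
proof -
  have nn: "0 \<le> \<eta> k * Re (tr I (mmult I (\<rho> k) M))" if "k \<in> K" for k
    using tr_psd(2)[OF finI psd_rho[OF that] M] eta_pos[OF that] by simp
  show ?thesis unfolding re_tr_avg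
    by (rule member_le_sum[OF xK nn finK]) simp
qed

lemma conf_bounds:
  assumes "r \<in> conf_set I K \<eta> \<rho> x"
  shows "0 \<le> r" "r \<le> 1"
proof -
  obtain M where M: "povm I K M" and pos: "Re (tr I (mmult I (avg_state K \<eta> \<rho>) (M (Some x)))) > 0"
    and r: "r = \<eta> x * Re (tr I (mmult I (\<rho> x) (M (Some x)))) / Re (tr I (mmult I (avg_state K \<eta> \<rho>) (M (Some x))))"
    using assms unfolding conf_set_def by blast
  have pM: "psd I (M (Some x))" using M xK unfolding povm_def by blast
  have "0 \<le> \<eta> x * Re (tr I (mmult I (\<rho> x) (M (Some x))))"
    using tr_psd(2)[OF finI psd_rho[OF xK] pM] eta_pos[OF xK] by simp
  then show "0 \<le> r" unfolding r using pos by simp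
  show "r \<le> 1" unfolding r using pos avg_ge[OF pM] by simp
qed

lemma eta_in_conf: "\<eta> x \<in> conf_set I K \<eta> \<rho> x"
proof -
  define M :: "'k option \<Rightarrow> 'a op" where "M = (\<lambda>u. if u = Some x then Idm else if u = None then (\<lambda>i j. Idm i j - Idm i j) else (\<lambda>i j. (0::complex)))"
  have pv: "povm I K M" unfolding M_def
    by (rule povm_two[OF finK xK psd_Idm[OF finI]]) (simp add: psd_zero)
  have t0: "tr I (mmult I (avg_state K \<eta> \<rho>) (M (Some x))) = 1"
    unfolding M_def tr_avg using tr_mmult_Idm[OF finI] tr_rho eta_sum
    by (simp flip: of_real_sum)
  have t1: "tr I (mmult I (\<rho> x) (M (Some x))) = 1"
    unfolding M_def using tr_mmult_Idm[OF finI] tr_rho[OF xK] by simp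
  show ?thesis unfolding conf_set_def
    using pv t0 t1 by (intro CollectI exI[of _ M]) simp
qed

lemma conf_ne: "conf_set I K \<eta> \<rho> x \<noteq> {}" using eta_in_conf by blast

lemma conf_bdd: "bdd_above (conf_set I K \<eta> \<rho> x)"
  using conf_bounds(2) by (intro bdd_aboveI[of _ 1]) blast

lemma conf_Sup_ge: "\<eta> x \<le> Sup (conf_set I K \<eta> \<rho> x)"
  by (rule cSup_upper[OF eta_in_conf conf_bdd])

end


lemma cs_complex:
  "(cmod (\<Sum>i\<in>I. cnj (w i) * v i))\<^sup>2 \<le> (\<Sum>i\<in>I. (cmod (w i))\<^sup>2) * (\<Sum>i\<in>I. (cmod (v i))\<^sup>2)"
proof -
  have "cmod (\<Sum>i\<in>I. cnj (w i) * v i) \<le> (\<Sum>i\<in>I. cmod (w i) * cmod (v i))"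
    by (rule order_trans[OF norm_sum]) (simp add: norm_mult)
  then have "(cmod (\<Sum>i\<in>I. cnj (w i) * v i))\<^sup>2 \<le> (\<Sum>i\<in>I. cmod (w i) * cmod (v i))\<^sup>2"
    by (rule power_mono) simp
  also have "\<dots> \<le> (\<Sum>i\<in>I. (cmod (w i))\<^sup>2) * (\<Sum>i\<in>I. (cmod (v i))\<^sup>2)"
    by (rule Cauchy_Schwarz_ineq_sum)
  finally show ?thesis .
qed

lemma qf_avg: "qf I (avg_state K \<eta> \<rho>) v = (\<Sum>k\<in>K. of_real (\<eta> k) * qf I (\<rho> k) v)"
  unfolding avg_state_def qf_sum[where A = "\<lambda>k a b. of_real (\<eta> k) * \<rho> k a b", simplified]
  by (simp add: qf_scale)

lemma tr_rank1:
  "tr I (mmult I A (\<lambda>i j. v i * cnj (v j) / of_real N)) = qf I A v / of_real N"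
proof -
  have "tr I (mmult I A (\<lambda>i j. v i * cnj (v j) / of_real N)) = (\<Sum>i\<in>I. \<Sum>j\<in>I. cnj (v i) * A i j * v j / of_real N)"
    unfolding tr_def mmult_def by (intro sum.cong refl) (simp add: ac_simps)
  also have "\<dots> = qf I A v / of_real N"
    unfolding qf_def by (simp add: sum_divide_distrib)
  finally show ?thesis .
qed

context
  fixes I :: "'a set" and K :: "'k set" and \<eta> :: "'k \<Rightarrow> real" and \<rho> :: "'k \<Rightarrow> 'a op" and x :: 'k
  assumes ens: "ensemble I K \<eta> \<rho>" and xK: "x \<in> K"
begin

lemma key_ineq:
  "\<eta> x * Re (qf I (\<rho> x) v) \<le> Sup (conf_set I K \<eta> \<rho> x) * Re (qf I (avg_state K \<eta> \<rho>) v)"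
proof -
  note finI = finI[OF ens xK] and finK = finK[OF ens xK]
  define c where "c = Sup (conf_set I K \<eta> \<rho> x)"
  have c0: "c > 0" unfolding c_def using conf_Sup_ge[OF ens xK] eta_pos[OF ens xK xK] by linarith
  define q0 where "q0 = qf I (avg_state K \<eta> \<rho>) v"
  define qx where "qx = qf I (\<rho> x) v"
  have Rq0: "Re q0 = (\<Sum>k\<in>K. \<eta> k * Re (qf I (\<rho> k) v))"
    unfolding q0_def qf_avg by (simp add: Re_sum)
  have nn: "0 \<le> \<eta> k * Re (qf I (\<rho> k) v)" if "k \<in> K" for k
    using psd_qf_nonneg[OF psd_rho[OF ens xK that]] eta_pos[OF ens xK that] by simp
  have ge: "\<eta> x * Re qx \<le> Re q0"
    unfolding Rq0 qx_def by (rule member_le_sum[OF xK nn finK]) simp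
  have qx0: "0 \<le> \<eta> x * Re qx" using nn[OF xK] unfolding qx_def .
  have main: "\<eta> x * Re qx \<le> c * Re q0"
  proof (cases "Re q0 > 0")
    case False
    then have "Re q0 = 0" using ge qx0 by linarith
    then show ?thesis using ge by simp
  next
    case True
    define N where "N = (\<Sum>i\<in>I. (cmod (v i))\<^sup>2)"
    have N0: "N > 0"
    proof (rule ccontr)
      assume "\<not> N > 0"
      then have "N = 0" unfolding N_def using sum_nonneg[of I "\<lambda>i. (cmod (v i))\<^sup>2"] by simp
      then have "\<forall>i\<in>I. (cmod (v i))\<^sup>2 = 0" unfolding N_def
        using sum_nonneg_eq_0_iff[OF finI, of "\<lambda>i. (cmod (v i))\<^sup>2"] by simp
      then have "\<forall>i\<in>I. v i = 0" by simp
      then have "q0 = 0" unfolding q0_def qf_def by simp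
      then show False using True by simp
    qed
    define Mx where "Mx = (\<lambda>i j. v i * cnj (v j) / of_real N)"
    have pMx: "psd I Mx"
    proof (rule gram_psd[where G = "{0::nat}" and u = "\<lambda>k i. v i / of_real (sqrt N)"])
      fix i j
      have "sqrt N * sqrt N = N" using N0 by simp
      then have sq: "of_real (sqrt N) * of_real (sqrt N) = (of_real N :: complex)"
        by (metis of_real_mult)
      have "v i / of_real (sqrt N) * cnj (v j / of_real (sqrt N)) = v i * cnj (v j) / (of_real (sqrt N) * of_real (sqrt N))"
        by simp
      also have "\<dots> = Mx i j" unfolding sq Mx_def ..
      finally show "Mx i j = (\<Sum>k\<in>{0::nat}. v i / of_real (sqrt N) * cnj (v j / of_real (sqrt N)))" by simp
    qed simp
    have pIM: "psd I (\<lambda>i j. Idm i j - Mx i j)"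
      unfolding psd_alt
    proof (intro conjI allI)
      show "herm I (\<lambda>i j. Idm i j - Mx i j)"
        by (rule herm_diff[OF psd_herm[OF psd_Idm[OF finI]] psd_herm[OF pMx]])
      fix w
      define y where "y = (\<Sum>i\<in>I. cnj (w i) * v i)"
      have "qf I Mx w = (\<Sum>i\<in>I. \<Sum>j\<in>I. (cnj (w i) * v i) * (cnj (v j) * w j) / of_real N)"
        unfolding qf_def Mx_def by (intro sum.cong refl) (simp add: ac_simps)
      also have "\<dots> = y * (\<Sum>j\<in>I. cnj (v j) * w j) / of_real N"
        unfolding y_def by (simp add: sum_product sum_divide_distrib)
      also have "(\<Sum>j\<in>I. cnj (v j) * w j) = cnj y"
        unfolding y_def by (simp add: mult.commute)
      also have "y * cnj y = of_real ((cmod y)\<^sup>2)" by (rule complex_norm_square[symmetric])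
      finally have qM: "qf I Mx w = of_real ((cmod y)\<^sup>2 / N)" by simp
      have eq: "qf I (\<lambda>i j. Idm i j - Mx i j) w = of_real ((\<Sum>i\<in>I. (cmod (w i))\<^sup>2) - (cmod y)\<^sup>2 / N)"
        unfolding qf_diff qM qf_Idm by simp
      have "(cmod y)\<^sup>2 \<le> (\<Sum>i\<in>I. (cmod (w i))\<^sup>2) * N"
        unfolding y_def N_def by (rule cs_complex)
      then have "(cmod y)\<^sup>2 / N \<le> (\<Sum>i\<in>I. (cmod (w i))\<^sup>2)"
        using N0 by (simp add: divide_le_eq)
      then have fin: "Im (qf I (\<lambda>i j. Idm i j - Mx i j) w) = 0 \<and> 0 \<le> Re (qf I (\<lambda>i j. Idm i j - Mx i j) w)"
        unfolding eq by simp
      then show "Im (qf I (\<lambda>i j. Idm i j - Mx i j) w) = 0" by blast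
      from fin show "0 \<le> Re (qf I (\<lambda>i j. Idm i j - Mx i j) w)" by blast
    qed
    define M :: "'k option \<Rightarrow> 'a op" where
      "M = (\<lambda>u. if u = Some x then Mx else if u = None then (\<lambda>i j. Idm i j - Mx i j) else (\<lambda>i j. 0))"
    have pv: "povm I K M" unfolding M_def by (rule povm_two[OF finK xK pMx pIM])
    have t0: "Re (tr I (mmult I (avg_state K \<eta> \<rho>) (M (Some x)))) = Re q0 / N"
      unfolding M_def Mx_def q0_def by (simp add: tr_rank1 Re_divide_of_real)
    have tx: "Re (tr I (mmult I (\<rho> x) (M (Some x)))) = Re qx / N"
      unfolding M_def Mx_def qx_def by (simp add: tr_rank1 Re_divide_of_real)
    have "\<eta> x * (Re qx / N) / (Re q0 / N) \<in> conf_set I K \<eta> \<rho> x"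
      unfolding conf_set_def using pv True N0 t0 tx by (intro CollectI exI[of _ M]) simp
    then have "\<eta> x * (Re qx / N) / (Re q0 / N) \<le> c"
      unfolding c_def by (rule cSup_upper[OF _ conf_bdd[OF ens xK]])
    moreover have "\<eta> x * (Re qx / N) / (Re q0 / N) = \<eta> x * Re qx / Re q0"
      using N0 by (simp add: field_simps)
    ultimately have "\<eta> x * Re qx / Re q0 \<le> c" by (simp only:)
    then show ?thesis using True by (simp add: pos_divide_le_eq mult.commute)
  qed
  then show ?thesis unfolding c_def q0_def qx_def .
qed

lemma op_ineq:
  "psd I (\<lambda>i j. of_real (Sup (conf_set I K \<eta> \<rho> x)) * avg_state K \<eta> \<rho> i j - of_real (\<eta> x) * \<rho> x i j)"
  unfolding psd_alt
proof (intro conjI allI)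
  show "herm I (\<lambda>i j. of_real (Sup (conf_set I K \<eta> \<rho> x)) * avg_state K \<eta> \<rho> i j - of_real (\<eta> x) * \<rho> x i j)"
    by (rule herm_diff[OF herm_scale[OF psd_herm[OF psd_avg[OF ens xK]]] herm_scale[OF psd_herm[OF psd_rho[OF ens xK xK]]]])
  fix v
  have e: "qf I (\<lambda>i j. of_real (Sup (conf_set I K \<eta> \<rho> x)) * avg_state K \<eta> \<rho> i j - of_real (\<eta> x) * \<rho> x i j) v
    = of_real (Sup (conf_set I K \<eta> \<rho> x)) * qf I (avg_state K \<eta> \<rho>) v - of_real (\<eta> x) * qf I (\<rho> x) v"
    by (simp only: qf_diff qf_scale)
  have fin: "Im (qf I (\<lambda>i j. of_real (Sup (conf_set I K \<eta> \<rho> x)) * avg_state K \<eta> \<rho> i j - of_real (\<eta> x) * \<rho> x i j) v) = 0 \<and>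
    0 \<le> Re (qf I (\<lambda>i j. of_real (Sup (conf_set I K \<eta> \<rho> x)) * avg_state K \<eta> \<rho> i j - of_real (\<eta> x) * \<rho> x i j) v)"
    unfolding e using psd_qf_real[OF psd_avg[OF ens xK]] psd_qf_real[OF psd_rho[OF ens xK xK]] key_ineq[of v]
    by simp
  then show "Im (qf I (\<lambda>i j. of_real (Sup (conf_set I K \<eta> \<rho> x)) * avg_state K \<eta> \<rho> i j - of_real (\<eta> x) * \<rho> x i j) v) = 0" by blast
  from fin show "0 \<le> Re (qf I (\<lambda>i j. of_real (Sup (conf_set I K \<eta> \<rho> x)) * avg_state K \<eta> \<rho> i j - of_real (\<eta> x) * \<rho> x i j) v)" by blast
qed

end


lemma sup_prod_le:
  fixes A :: "'l \<Rightarrow> real set"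
  assumes "finite F"
    and ne: "\<And>l. l \<in> F \<Longrightarrow> A l \<noteq> {}" and bdd: "\<And>l. l \<in> F \<Longrightarrow> bdd_above (A l)"
    and nn: "\<And>l r. l \<in> F \<Longrightarrow> r \<in> A l \<Longrightarrow> 0 \<le> r"
    and le: "\<And>r. r \<in> Pi F A \<Longrightarrow> (\<Prod>l\<in>F. r l) \<le> S"
  shows "(\<Prod>l\<in>F. Sup (A l)) \<le> S"
  using assms(1) ne bdd nn le
proof (induction F arbitrary: S rule: finite_induct)
  case empty
  then show ?case by (metis Pi_empty UNIV_I prod.empty)
next
  case (insert a F)
  define r0 where "r0 = (\<lambda>l. SOME y. y \<in> A l)"
  have r0: "r0 \<in> Pi (insert a F) A"
    unfolding r0_def using insert.prems(1) by (auto simp: some_in_eq)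
  have S0: "0 \<le> S"
    using insert.prems(4)[OF r0] prod_nonneg[of "insert a F" r0] insert.prems(3) r0 by force
  define s where "s = Sup (A a)"
  have s0: "0 \<le> s"
  proof -
    have "r0 a \<in> A a" using r0 by auto
    then have "r0 a \<le> s" unfolding s_def using insert.prems(2) by (intro cSup_upper) auto
    moreover have "0 \<le> r0 a" using insert.prems(3) \<open>r0 a \<in> A a\<close> by auto
    ultimately show ?thesis by linarith
  qed
  have eq: "(\<Prod>l\<in>insert a F. Sup (A l)) = s * (\<Prod>l\<in>F. Sup (A l))"
    unfolding s_def using insert.hyps by simp
  show ?case
  proof (cases "s = 0")
    case True
    then show ?thesis unfolding eq using S0 by simp
  next
    case False
    then have spos: "s > 0" using s0 by simp
    have "(\<Prod>l\<in>F. Sup (A l)) \<le> S / s"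
    proof (rule insert.IH)
      fix r assume r: "r \<in> Pi F A"
      define P where "P = (\<Prod>l\<in>F. r l)"
      have P0: "0 \<le> P" unfolding P_def using r insert.prems(3) by (auto intro!: prod_nonneg)
      have yP: "y * P \<le> S" if y: "y \<in> A a" for y
      proof -
        have "r(a := y) \<in> Pi (insert a F) A" using r y by auto
        from insert.prems(4)[OF this] have "(\<Prod>l\<in>insert a F. (r(a := y)) l) \<le> S" .
        moreover have "(\<Prod>l\<in>insert a F. (r(a := y)) l) = y * P"
        proof -
          have "(\<Prod>l\<in>F. (r(a := y)) l) = P" unfolding P_def using insert.hyps(2) by (intro prod.cong refl) auto
          then show ?thesis using insert.hyps by simp
        qed
        ultimately show ?thesis by simp
      qed
      show "(\<Prod>l\<in>F. r l) \<le> S / s"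
      proof (cases "P = 0")
        case True
        then show ?thesis unfolding P_def using S0 spos by simp
      next
        case False
        then have Ppos: "P > 0" using P0 by simp
        have "s \<le> S / P" unfolding s_def
          using insert.prems(1) yP Ppos by (intro cSup_least) (auto simp: pos_le_divide_eq)
        then have "s * P \<le> S" using Ppos by (simp add: pos_le_divide_eq)
        then show ?thesis unfolding P_def[symmetric] using spos by (simp add: pos_le_divide_eq mult.commute)
      qed
    qed (use insert.prems in auto)
    then have "s * (\<Prod>l\<in>F. Sup (A l)) \<le> S" using spos by (simp add: pos_le_divide_eq mult.commute)
    then show ?thesis unfolding eq .
  qed
qed

lemma Re_prod_real:
  assumes "\<And>l. l \<in> F \<Longrightarrow> Im (t l) = 0"
  shows "Re (\<Prod>l\<in>F. t l) = (\<Prod>l\<in>F. Re (t l))"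
proof -
  have "(\<Prod>l\<in>F. t l) = (\<Prod>l\<in>F. of_real (Re (t l)))"
    using assms by (intro prod.cong refl) (simp add: complex_eq_iff)
  also have "\<dots> = of_real (\<Prod>l\<in>F. Re (t l))" by (rule of_real_prod[symmetric])
  finally have e: "(\<Prod>l\<in>F. t l) = of_real (\<Prod>l\<in>F. Re (t l))" .
  show ?thesis unfolding e by (rule Re_complex_of_real)
qed

lemma idm_tensor:
  assumes "finite F" "a \<in> PiE F I" "b \<in> PiE F I"
  shows "(\<Prod>l\<in>F. Idm (a l) (b l)) = (Idm a b :: complex)"
proof (cases "a = b")
  case True
  then show ?thesis by (simp add: Idm_def)
next
  case False
  then obtain l where "l \<in> F" "a l \<noteq> b l" using assms(2,3) PiE_ext by metis
  then have "(\<Prod>l\<in>F. Idm (a l) (b l)) = (0::complex)"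
    using assms(1) by (auto simp: Idm_def intro!: prod_zero)
  then show ?thesis using False by (simp add: Idm_def)
qed

lemma povm_compl:
  assumes M: "povm I K M" and x: "x \<in> K" and fK: "finite K"
  shows "psd I (\<lambda>i j. Idm i j - M (Some x) i j)"
proof -
  let ?U = "insert None (Some ` K)"
  have fU: "finite ?U" using fK by simp
  have xU: "Some x \<in> ?U" using x by simp
  have "psd I (\<lambda>i j. \<Sum>u\<in>?U - {Some x}. M u i j)"
    by (rule psd_sum) (use fU M in \<open>auto simp: povm_def\<close>)
  moreover have "(\<Sum>u\<in>?U - {Some x}. M u i j) = Idm i j - M (Some x) i j" if "i \<in> I" "j \<in> I" for i j
  proof -
    have "Idm i j = (\<Sum>u\<in>?U. M u i j)" using M that unfolding povm_def Idm_def by simp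
    also have "\<dots> = M (Some x) i j + (\<Sum>u\<in>?U - {Some x}. M u i j)"
      by (rule sum.remove[OF fU xU])
    finally show ?thesis by simp
  qed
  ultimately show ?thesis using psd_cong[of I "\<lambda>i j. \<Sum>u\<in>?U - {Some x}. M u i j" "\<lambda>i j. Idm i j - M (Some x) i j"]
    by simp
qed


lemma avg_seq:
  assumes fin: "\<And>l. l \<in> {1..L} \<Longrightarrow> finite (K l)"
  shows "avg_state (PiE {1..L} K) (seq_prob L \<eta>) (seq_state L \<rho>)
    = (\<lambda>a b. \<Prod>l\<in>{1..L}. avg_state (K l) (\<eta> l) (\<rho> l) (a l) (b l))"
proof (intro ext)
  fix a b
  have "avg_state (PiE {1..L} K) (seq_prob L \<eta>) (seq_state L \<rho>) a b
     = (\<Sum>c\<in>PiE {1..L} K. \<Prod>l\<in>{1..L}. of_real (\<eta> l (c l)) * \<rho> l (c l) (a l) (b l))"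
    unfolding avg_state_def seq_prob_def seq_state_def by (simp add: of_real_prod prod.distrib)
  also have "\<dots> = (\<Prod>l\<in>{1..L}. \<Sum>k\<in>K l. of_real (\<eta> l k) * \<rho> l k (a l) (b l))"
    using prod_sum_PiE[where A="{1..L}" and B=K and f="\<lambda>l k. of_real (\<eta> l k) * \<rho> l k (a l) (b l)"] fin
    by simp
  finally show "avg_state (PiE {1..L} K) (seq_prob L \<eta>) (seq_state L \<rho>) a b
    = (\<Prod>l\<in>{1..L}. avg_state (K l) (\<eta> l) (\<rho> l) (a l) (b l))"
    unfolding avg_state_def .
qed

theorem theorem4:
  fixes L :: nat
    and I :: "nat \<Rightarrow> 'a set"
    and K :: "nat \<Rightarrow> 'k set"
    and \<eta> :: "nat \<Rightarrow> 'k \<Rightarrow> real"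
    and \<rho> :: "nat \<Rightarrow> 'k \<Rightarrow> 'a op"
    and x :: "nat \<Rightarrow> 'k"
  assumes "L \<ge> 1"
    and "\<And>l. l \<in> {1..L} \<Longrightarrow> ensemble (I l) (K l) (\<eta> l) (\<rho> l)"
    and "x \<in> seq_labels L K"
  shows "max_conf (seq_basis L I) (seq_labels L K) (seq_prob L \<eta>) (seq_state L \<rho>) x
         = (\<Prod>l\<in>{1..L}. max_conf (I l) (K l) (\<eta> l) (\<rho> l) (x l))"
proof -
  define F where "F = {1..L}"
  have fF: "finite F" unfolding F_def by simp
  have ens: "\<And>l. l \<in> F \<Longrightarrow> ensemble (I l) (K l) (\<eta> l) (\<rho> l)" using assms(2) unfolding F_def .
  have xK: "\<And>l. l \<in> F \<Longrightarrow> x l \<in> K l" using assms(3) unfolding seq_labels_def F_def by (auto simp: PiE_iff)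
  have xPi: "x \<in> PiE F K" using assms(3) unfolding seq_labels_def F_def .
  have fI: "finite (I l)" if "l \<in> F" for l using finI[OF ens[OF that] xK[OF that]] .
  have fK: "finite (K l)" if "l \<in> F" for l using finK[OF ens[OF that] xK[OF that]] .
  have fPI: "finite (PiE F I)" using fF fI by (simp add: finite_PiE)
  have fPK: "finite (PiE F K)" using fF fK by (simp add: finite_PiE)
  define c where "c = (\<lambda>l. Sup (conf_set (I l) (K l) (\<eta> l) (\<rho> l) (x l)))"
  define C where "C = (\<Prod>l\<in>F. c l)"
  define Sq where "Sq = conf_set (PiE F I) (PiE F K) (seq_prob L \<eta>) (seq_state L \<rho>) x"
  define rho0 where "rho0 = (\<lambda>l. avg_state (K l) (\<eta> l) (\<rho> l))"
  have avg: "avg_state (PiE F K) (seq_prob L \<eta>) (seq_state L \<rho>) = (\<lambda>a b. \<Prod>l\<in>F. rho0 l (a l) (b l))"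
    unfolding F_def rho0_def by (rule avg_seq) (use fK in \<open>auto simp: F_def\<close>)
  have sx: "seq_state L \<rho> x = (\<lambda>a b. \<Prod>l\<in>F. \<rho> l (x l) (a l) (b l))"
    unfolding seq_state_def F_def ..
  have sp: "seq_prob L \<eta> x = (\<Prod>l\<in>F. \<eta> l (x l))" unfolding seq_prob_def F_def ..
  have lhs: "max_conf (seq_basis L I) (seq_labels L K) (seq_prob L \<eta>) (seq_state L \<rho>) x = Sup Sq"
    unfolding Sq_def max_conf_Sup seq_basis_def seq_labels_def F_def ..
  have rhs: "(\<Prod>l\<in>{1..L}. max_conf (I l) (K l) (\<eta> l) (\<rho> l) (x l)) = C"
    unfolding C_def c_def F_def max_conf_Sup ..
  have Some_x: "Some x \<in> insert None (Some ` PiE F K)" using xPi by simp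

  have upper: "e \<le> C" if e: "e \<in> Sq" for e
  proof -
    obtain M where M: "povm (PiE F I) (PiE F K) M"
      and pos: "Re (tr (PiE F I) (mmult (PiE F I) (avg_state (PiE F K) (seq_prob L \<eta>) (seq_state L \<rho>)) (M (Some x)))) > 0"
      and e_eq: "e = seq_prob L \<eta> x * Re (tr (PiE F I) (mmult (PiE F I) (seq_state L \<rho> x) (M (Some x))))
          / Re (tr (PiE F I) (mmult (PiE F I) (avg_state (PiE F K) (seq_prob L \<eta>) (seq_state L \<rho>)) (M (Some x))))"
      using e unfolding Sq_def conf_set_def by blast
    have pM: "psd (PiE F I) (M (Some x))" using M Some_x unfolding povm_def by blast
    have D: "psd (PiE F I) (\<lambda>a b. (\<Prod>l\<in>F. (\<lambda>i j. of_real (c l) * rho0 l i j) (a l) (b l))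
                 - (\<Prod>l\<in>F. (\<lambda>i j. of_real (\<eta> l (x l)) * \<rho> l (x l) i j) (a l) (b l)))"
    proof (rule telescope[OF fF fI])
      fix l assume l: "l \<in> F"
      show "psd (I l) (\<lambda>i j. of_real (\<eta> l (x l)) * \<rho> l (x l) i j)"
        by (rule psd_scale[OF psd_rho[OF ens[OF l] xK[OF l] xK[OF l]]]) (use eta_pos[OF ens[OF l] xK[OF l] xK[OF l]] in simp)
      show "psd (I l) (\<lambda>i j. of_real (c l) * rho0 l i j - of_real (\<eta> l (x l)) * \<rho> l (x l) i j)"
        unfolding c_def rho0_def by (rule op_ineq[OF ens[OF l] xK[OF l]])
    qed
    have Deq: "(\<lambda>a b. (\<Prod>l\<in>F. (\<lambda>i j. of_real (c l) * rho0 l i j) (a l) (b l))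
                 - (\<Prod>l\<in>F. (\<lambda>i j. of_real (\<eta> l (x l)) * \<rho> l (x l) i j) (a l) (b l)))
        = (\<lambda>a b. of_real C * avg_state (PiE F K) (seq_prob L \<eta>) (seq_state L \<rho>) a b
                 - of_real (seq_prob L \<eta> x) * seq_state L \<rho> x a b)"
      unfolding avg sx sp C_def by (simp add: prod.distrib of_real_prod)
    have "0 \<le> Re (tr (PiE F I) (mmult (PiE F I) (\<lambda>a b. of_real C * avg_state (PiE F K) (seq_prob L \<eta>) (seq_state L \<rho>) a b
                 - of_real (seq_prob L \<eta> x) * seq_state L \<rho> x a b) (M (Some x))))"
      using tr_psd(2)[OF fPI D pM] unfolding Deq .
    then have "seq_prob L \<eta> x * Re (tr (PiE F I) (mmult (PiE F I) (seq_state L \<rho> x) (M (Some x))))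
        \<le> C * Re (tr (PiE F I) (mmult (PiE F I) (avg_state (PiE F K) (seq_prob L \<eta>) (seq_state L \<rho>)) (M (Some x))))"
      unfolding tr_mmult_diff tr_mmult_scale by simp
    then show ?thesis unfolding e_eq using pos by (simp add: pos_divide_le_eq)
  qed
  have bddSq: "bdd_above Sq" using upper by (intro bdd_aboveI) blast

  text \<open>Lower bound: product measurements.\<close>
  have lower: "(\<Prod>l\<in>F. r l) \<in> Sq" if r: "r \<in> Pi F (\<lambda>l. conf_set (I l) (K l) (\<eta> l) (\<rho> l) (x l))" for r
  proof -
    have "\<forall>l\<in>F. \<exists>Ml. povm (I l) (K l) Ml \<and> Re (tr (I l) (mmult (I l) (rho0 l) (Ml (Some (x l))))) > 0
        \<and> r l = \<eta> l (x l) * Re (tr (I l) (mmult (I l) (\<rho> l (x l)) (Ml (Some (x l)))))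
               / Re (tr (I l) (mmult (I l) (rho0 l) (Ml (Some (x l)))))"
      using r unfolding conf_set_def rho0_def by blast
    then obtain Ms where Ms: "\<And>l. l \<in> F \<Longrightarrow> povm (I l) (K l) (Ms l)"
      and Mpos: "\<And>l. l \<in> F \<Longrightarrow> Re (tr (I l) (mmult (I l) (rho0 l) (Ms l (Some (x l))))) > 0"
      and Mr: "\<And>l. l \<in> F \<Longrightarrow> r l = \<eta> l (x l) * Re (tr (I l) (mmult (I l) (\<rho> l (x l)) (Ms l (Some (x l)))))
               / Re (tr (I l) (mmult (I l) (rho0 l) (Ms l (Some (x l)))))"
      by metis
    have pMs: "psd (I l) (Ms l (Some (x l)))" if l: "l \<in> F" for l
      using Ms[OF l] xK[OF l] unfolding povm_def by blast
    define T where "T = (\<lambda>a b. \<Prod>l\<in>F. Ms l (Some (x l)) (a l) (b l))"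
    have pT: "psd (PiE F I) T" unfolding T_def by (rule tensor_psd[OF fF fI pMs])
    have pIT0: "psd (PiE F I) (\<lambda>a b. (\<Prod>l\<in>F. Idm (a l) (b l)) - (\<Prod>l\<in>F. Ms l (Some (x l)) (a l) (b l)))"
      by (rule telescope[OF fF fI pMs povm_compl[OF Ms xK fK]])
    have pIT: "psd (PiE F I) (\<lambda>a b. Idm a b - T a b)"
    proof -
      have "psd (PiE F I) (\<lambda>a b. (\<Prod>l\<in>F. Idm (a l) (b l)) - (\<Prod>l\<in>F. Ms l (Some (x l)) (a l) (b l)))
          = psd (PiE F I) (\<lambda>a b. Idm a b - T a b)"
        by (rule psd_cong) (simp add: T_def idm_tensor[OF fF])
      then show ?thesis using pIT0 by simp
    qed
    define Mq :: "(nat \<Rightarrow> 'k) option \<Rightarrow> (nat \<Rightarrow> 'a) op" where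
      "Mq = (\<lambda>u. if u = Some x then T else if u = None then (\<lambda>i j. Idm i j - T i j) else (\<lambda>i j. 0))"
    have pv: "povm (PiE F I) (PiE F K) Mq" unfolding Mq_def by (rule povm_two[OF fPK xPi pT pIT])
    define t where "t = (\<lambda>l. tr (I l) (mmult (I l) (\<rho> l (x l)) (Ms l (Some (x l)))))"
    define d where "d = (\<lambda>l. tr (I l) (mmult (I l) (rho0 l) (Ms l (Some (x l)))))"
    have tI: "Im (t l) = 0" if l: "l \<in> F" for l
      unfolding t_def by (rule tr_psd(1)[OF fI[OF l] psd_rho[OF ens[OF l] xK[OF l] xK[OF l]] pMs[OF l]])
    have dI: "Im (d l) = 0" if l: "l \<in> F" for l
      unfolding d_def rho0_def by (rule tr_psd(1)[OF fI[OF l] psd_avg[OF ens[OF l] xK[OF l]] pMs[OF l]])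
    have num: "Re (tr (PiE F I) (mmult (PiE F I) (seq_state L \<rho> x) (Mq (Some x)))) = (\<Prod>l\<in>F. Re (t l))"
    proof -
      have "tr (PiE F I) (mmult (PiE F I) (\<lambda>a b. \<Prod>l\<in>F. \<rho> l (x l) (a l) (b l)) (\<lambda>a b. \<Prod>l\<in>F. Ms l (Some (x l)) (a l) (b l)))
          = (\<Prod>l\<in>F. t l)"
        unfolding t_def by (rule tensor_tr[where I=I, OF fF fI])
      then show ?thesis unfolding Mq_def sx T_def using Re_prod_real[where F=F, OF tI] by simp
    qed
    have den: "Re (tr (PiE F I) (mmult (PiE F I) (avg_state (PiE F K) (seq_prob L \<eta>) (seq_state L \<rho>)) (Mq (Some x))))
        = (\<Prod>l\<in>F. Re (d l))"
    proof -
      have "tr (PiE F I) (mmult (PiE F I) (\<lambda>a b. \<Prod>l\<in>F. rho0 l (a l) (b l)) (\<lambda>a b. \<Prod>l\<in>F. Ms l (Some (x l)) (a l) (b l)))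
          = (\<Prod>l\<in>F. d l)"
        unfolding d_def by (rule tensor_tr[where I=I, OF fF fI])
      then show ?thesis unfolding Mq_def avg T_def using Re_prod_real[where F=F, OF dI] by simp
    qed
    have dpos: "0 < (\<Prod>l\<in>F. Re (d l))" unfolding d_def by (rule prod_pos) (use Mpos in simp)
    have val: "seq_prob L \<eta> x * (\<Prod>l\<in>F. Re (t l)) / (\<Prod>l\<in>F. Re (d l)) = (\<Prod>l\<in>F. r l)"
    proof -
      have "(\<Prod>l\<in>F. r l) = (\<Prod>l\<in>F. \<eta> l (x l) * Re (t l) / Re (d l))"
        using Mr unfolding t_def d_def by (intro prod.cong refl) simp
      also have "\<dots> = seq_prob L \<eta> x * (\<Prod>l\<in>F. Re (t l)) / (\<Prod>l\<in>F. Re (d l))"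
        unfolding sp by (simp add: prod.distrib prod_dividef)
      finally show ?thesis by simp
    qed
    show ?thesis unfolding Sq_def conf_set_def
      using pv num den dpos val by (intro CollectI exI[of _ Mq]) simp
  qed

  have confs: "l \<in> F \<Longrightarrow> conf_set (I l) (K l) (\<eta> l) (\<rho> l) (x l) \<noteq> {}"
    "l \<in> F \<Longrightarrow> bdd_above (conf_set (I l) (K l) (\<eta> l) (\<rho> l) (x l))"
    "l \<in> F \<Longrightarrow> r \<in> conf_set (I l) (K l) (\<eta> l) (\<rho> l) (x l) \<Longrightarrow> 0 \<le> r" for l r
    using conf_ne[OF ens xK] conf_bdd[OF ens xK] conf_bounds(1)[OF ens xK] by auto
  have Sq_ne: "Sq \<noteq> {}"
  proof -
    define r0 where "r0 = (\<lambda>l. SOME y. y \<in> conf_set (I l) (K l) (\<eta> l) (\<rho> l) (x l))"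
    have "r0 \<in> Pi F (\<lambda>l. conf_set (I l) (K l) (\<eta> l) (\<rho> l) (x l))"
      unfolding r0_def using confs(1) by (auto simp: some_in_eq)
    then show ?thesis using lower by blast
  qed
  have le1: "Sup Sq \<le> C" by (rule cSup_least[OF Sq_ne upper])
  have le2: "C \<le> Sup Sq" unfolding C_def c_def
    by (rule sup_prod_le[OF fF confs(1,2,3)]) (auto intro: cSup_upper[OF lower bddSq])
  show ?thesis unfolding lhs rhs using le1 le2 by simp
qed

end
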